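(* Let $E$ be a $K$-contact Lie algebroid with structure $(F_E,\xi,\eta,g_E)$, fundamental form $\Omega_E$, and Levi-Civita connection $\nabla$ of $g_E$. Then for all $s,s_1,s_2\in\Gamma(E)$: $$(\nabla_{s_1}\eta)s_2=g_E(\nabla_{s_1}\xi,s_2)=\Omega_E(s_1,s_2),\qquad (\nabla_sF_E)\xi=-s+\eta(s)\xi.$$
   Context: A Lie algebroid $(E,\rho_E,[\cdot,\cdot]_E)$ over $M$ is a vector bundle with anchor $\rho_E:E\to TM$ and Lie bracket on $\Gamma(E)$ with $[s_1,fs_2]_E=f[s_1,s_2]_E+\rho_E(s_1)(f)s_2$. For a 1-form $\eta$, $(d_E\eta)(s_1,s_2)=\frac12\{\rho_E(s_1)(\eta(s_2))-\rho_E(s_2)(\eta(s_1))-\eta([s_1,s_2]_E)\}$. For $E$ of rank $2m+1$, an almost contact Riemannian structure $(F_E,\xi,\eta,g_E)$: endomorphism $F_E$, $\xi\in\Gamma(E)$, $\eta\in\Gamma(E^* )$, bundle metric $g_E$ with $F_E^2=-I_E+\eta\otimes\xi$, $\eta(\xi)=1$, $g_E(F_Es_1,F_Es_2)=g_E(s_1,s_2)-\eta(s_1)\eta(s_2)$; fundamental form $\Omega_E(s_1,s_2)=g_E(s_1,F_Es_2)$. $E$ is contact Riemannian if also $\eta\wedge(d_E\eta)^m$ vanishes nowhere and $d_E\eta=\Omega_E$; it is $K$-contact if moreover $\xi$ is Killing: $\rho_E(\xi)(g_E(s_1,s_2))-g_E([\xi,s_1]_E,s_2)-g_E(s_1,[\xi,s_2]_E)=0$.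 The Levi-Civita connection $\nabla$ is the unique torsion-free metric $E$-connection ($\nabla_{s_1}s_2-\nabla_{s_2}s_1=[s_1,s_2]_E$, $\rho_E(s)(g_E(s_1,s_2))=g_E(\nabla_ss_1,s_2)+g_E(s_1,\nabla_ss_2)$); $(\nabla_{s_1}\eta)(s_2)=\rho_E(s_1)(\eta(s_2))-\eta(\nabla_{s_1}s_2)$ and $(\nabla_sF_E)s'=\nabla_s(F_Es')-F_E(\nabla_ss')$. *)

theory Defs
  imports Complex_Main "HOL-Combinatorics.Permutations" "HOL-Library.Function_Algebras"
begin

text \<open>
The vector bundle E is given by
  its fibres: the fibre over x is the linear subspace fib x of an ambient real vector
  space 'v (every family of vector spaces embeds fibrewise into a common one).
  Smooth functions on M form the set C of real functions on M (a subalgebra),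
  smooth sections of E form the set Gam of maps s with s x in fib x; Gam is a
  C-module under pointwise operations.  Bundle maps (F_E, eta, g_E) are given
  fibrewise and send smooth sections to smooth sections / smooth functions.
  A vector field rho(s) is represented by its action on smooth functions
  (a derivation of C).
\<close>

definition fmul :: "('m \<Rightarrow> real) \<Rightarrow> ('m \<Rightarrow> 'v::real_vector) \<Rightarrow> ('m \<Rightarrow> 'v)" where
  "fmul f s = (\<lambda>x. f x *\<^sub>R s x)"

definition lin_on :: "'v::real_vector set \<Rightarrow> ('v \<Rightarrow> 'w::real_vector) \<Rightarrow> bool" where
  "lin_on V f \<longleftrightarrow> (\<forall>u\<in>V. \<forall>v\<in>V. f (u + v) = f u + f v) \<and> (\<forall>c. \<forall>u\<in>V. f (c *\<^sub>R u) = c *\<^sub>R f u)"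

definition smooth_algebra :: "('m \<Rightarrow> real) set \<Rightarrow> bool" where
  "smooth_algebra C \<longleftrightarrow> (\<forall>c. (\<lambda>_. c) \<in> C) \<and>
     (\<forall>f\<in>C. \<forall>h\<in>C. f + h \<in> C \<and> f * h \<in> C \<and> - f \<in> C)"

definition vector_bundle ::
  "('m \<Rightarrow> real) set \<Rightarrow> ('m \<Rightarrow> 'v::real_vector set) \<Rightarrow> ('m \<Rightarrow> 'v) set \<Rightarrow> nat \<Rightarrow> bool" where
  "vector_bundle C fib Gam r \<longleftrightarrow> smooth_algebra C \<and>
     (\<forall>x. subspace (fib x) \<and> dim (fib x) = r) \<and>
     (\<forall>s\<in>Gam. \<forall>x. s x \<in> fib x) \<and>
     (\<lambda>_. 0) \<in> Gam \<and>
     (\<forall>s\<in>Gam. \<forall>t\<in>Gam. s + t \<in> Gam) \<and>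
     (\<forall>f\<in>C. \<forall>s\<in>Gam. fmul f s \<in> Gam) \<and>
     (\<forall>x. \<forall>v\<in>fib x. \<exists>s\<in>Gam. s x = v)"

definition lie_algebroid ::
  "('m \<Rightarrow> real) set \<Rightarrow> ('m \<Rightarrow> 'v::real_vector set) \<Rightarrow> ('m \<Rightarrow> 'v) set \<Rightarrow> nat \<Rightarrow>
   (('m \<Rightarrow> 'v) \<Rightarrow> ('m \<Rightarrow> real) \<Rightarrow> ('m \<Rightarrow> real)) \<Rightarrow>
   (('m \<Rightarrow> 'v) \<Rightarrow> ('m \<Rightarrow> 'v) \<Rightarrow> ('m \<Rightarrow> 'v)) \<Rightarrow> bool" where
  "lie_algebroid C fib Gam r rho br \<longleftrightarrow> vector_bundle C fib Gam r \<and>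
     \<comment> \<open>anchor: C-linear in the section, derivation of smooth functions\<close>
     (\<forall>s\<in>Gam. \<forall>f\<in>C. rho s f \<in> C) \<and>
     (\<forall>s\<in>Gam. \<forall>t\<in>Gam. \<forall>h\<in>C. \<forall>f\<in>C. rho (fmul h s + t) f = h * rho s f + rho t f) \<and>
     (\<forall>s\<in>Gam. \<forall>f\<in>C. \<forall>h\<in>C. \<forall>c::real.
        rho s (f + h) = rho s f + rho s h \<and>
        rho s (\<lambda>x. c * f x) = (\<lambda>x. c * rho s f x) \<and>
        rho s (f * h) = f * rho s h + h * rho s f) \<and>
     \<comment> \<open>Lie bracket: real bilinear, skew, Jacobi, Leibniz\<close>
     (\<forall>s\<in>Gam. \<forall>t\<in>Gam. br s t \<in> Gam) \<and>
     (\<forall>s\<in>Gam. \<forall>t\<in>Gam. \<forall>u\<in>Gam. \<forall>c::real.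
        br s (t + u) = br s t + br s u \<and>
        br s (fmul (\<lambda>_. c) t) = fmul (\<lambda>_. c) (br s t) \<and>
        br s t = - br t s \<and>
        br s (br t u) + br t (br u s) + br u (br s t) = 0) \<and>
     (\<forall>s\<in>Gam. \<forall>t\<in>Gam. \<forall>f\<in>C. br s (fmul f t) = fmul f (br s t) + fmul (rho s f) t)"

definition almost_contact_riemannian ::
  "('m \<Rightarrow> real) set \<Rightarrow> ('m \<Rightarrow> 'v::real_vector set) \<Rightarrow> ('m \<Rightarrow> 'v) set \<Rightarrow>
   ('m \<Rightarrow> 'v \<Rightarrow> 'v) \<Rightarrow> ('m \<Rightarrow> 'v) \<Rightarrow> ('m \<Rightarrow> 'v \<Rightarrow> real) \<Rightarrow> ('m \<Rightarrow> 'v \<Rightarrow> 'v \<Rightarrow> real) \<Rightarrow> bool" where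
  "almost_contact_riemannian C fib Gam F xi eta g \<longleftrightarrow>
     \<comment> \<open>F endomorphism, eta 1-form, xi section, g bundle metric\<close>
     (\<forall>x. lin_on (fib x) (F x) \<and> (\<forall>v\<in>fib x. F x v \<in> fib x)) \<and>
     (\<forall>x. lin_on (fib x) (eta x)) \<and>
     (\<forall>x. \<forall>u\<in>fib x. lin_on (fib x) (g x u) \<and> (\<forall>v\<in>fib x. g x u v = g x v u)) \<and>
     (\<forall>x. \<forall>u\<in>fib x. u \<noteq> 0 \<longrightarrow> g x u u > 0) \<and>
     (\<forall>s\<in>Gam. (\<lambda>x. F x (s x)) \<in> Gam) \<and>
     (\<forall>s\<in>Gam. (\<lambda>x. eta x (s x)) \<in> C) \<and>
     (\<forall>s\<in>Gam. \<forall>t\<in>Gam. (\<lambda>x. g x (s x) (t x)) \<in> C) \<and>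
     xi \<in> Gam \<and>
     \<comment> \<open>structure equations\<close>
     (\<forall>x. \<forall>v\<in>fib x. F x (F x v) = - v + eta x v *\<^sub>R xi x) \<and>
     (\<forall>x. eta x (xi x) = 1) \<and>
     (\<forall>x. \<forall>u\<in>fib x. \<forall>v\<in>fib x. g x (F x u) (F x v) = g x u v - eta x u * eta x v)"

definition Omega_E :: "('m \<Rightarrow> 'v \<Rightarrow> 'v) \<Rightarrow> ('m \<Rightarrow> 'v \<Rightarrow> 'v \<Rightarrow> real) \<Rightarrow>
   ('m \<Rightarrow> 'v) \<Rightarrow> ('m \<Rightarrow> 'v) \<Rightarrow> ('m \<Rightarrow> real)" where
  "Omega_E F g s1 s2 = (\<lambda>x. g x (s1 x) (F x (s2 x)))"

definition d_E :: "(('m \<Rightarrow> 'v) \<Rightarrow> ('m \<Rightarrow> real) \<Rightarrow> ('m \<Rightarrow> real)) \<Rightarrow>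
   (('m \<Rightarrow> 'v) \<Rightarrow> ('m \<Rightarrow> 'v) \<Rightarrow> ('m \<Rightarrow> 'v)) \<Rightarrow> ('m \<Rightarrow> 'v \<Rightarrow> real) \<Rightarrow>
   ('m \<Rightarrow> 'v) \<Rightarrow> ('m \<Rightarrow> 'v) \<Rightarrow> ('m \<Rightarrow> real)" where
  "d_E rho br eta s1 s2 = (\<lambda>x. (1/2) * (rho s1 (\<lambda>y. eta y (s2 y)) x - rho s2 (\<lambda>y. eta y (s1 y)) x
        - eta x (br s1 s2 x)))"

text \<open>(eta \<and> omega^m)(s_0,...,s_2m) evaluated at x, up to a nonzero constant
  normalisation factor (irrelevant for vanishing).\<close>
definition wedge_eta_pow :: "nat \<Rightarrow> ('m \<Rightarrow> 'v \<Rightarrow> real) \<Rightarrow>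
   (('m \<Rightarrow> 'v) \<Rightarrow> ('m \<Rightarrow> 'v) \<Rightarrow> ('m \<Rightarrow> real)) \<Rightarrow> (nat \<Rightarrow> ('m \<Rightarrow> 'v)) \<Rightarrow> 'm \<Rightarrow> real" where
  "wedge_eta_pow m eta om ss x =
     (\<Sum>\<sigma> | \<sigma> permutes {..2*m}. of_int (sign \<sigma>) * eta x (ss (\<sigma> 0) x) *
        (\<Prod>i<m. om (ss (\<sigma> (2*i+1))) (ss (\<sigma> (2*i+2))) x))"

definition nowhere_vanishing_contact :: "('m \<Rightarrow> 'v) set \<Rightarrow> nat \<Rightarrow> ('m \<Rightarrow> 'v \<Rightarrow> real) \<Rightarrow>
   (('m \<Rightarrow> 'v) \<Rightarrow> ('m \<Rightarrow> 'v) \<Rightarrow> ('m \<Rightarrow> real)) \<Rightarrow> bool" where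
  "nowhere_vanishing_contact Gam m eta om \<longleftrightarrow>
     (\<forall>x. \<exists>ss. (\<forall>i\<le>2*m. ss i \<in> Gam) \<and> wedge_eta_pow m eta om ss x \<noteq> 0)"

definition K_contact_lie_algebroid where
  "K_contact_lie_algebroid C fib Gam m rho br F xi eta g \<longleftrightarrow>
     lie_algebroid C fib Gam (2*m+1) rho br \<and>
     almost_contact_riemannian C fib Gam F xi eta g \<and>
     \<comment> \<open>contact Riemannian\<close>
     nowhere_vanishing_contact Gam m eta (d_E rho br eta) \<and>
     (\<forall>s1\<in>Gam. \<forall>s2\<in>Gam. d_E rho br eta s1 s2 = Omega_E F g s1 s2) \<and>
     \<comment> \<open>xi is Killing\<close>
     (\<forall>s1\<in>Gam. \<forall>s2\<in>Gam.
        rho xi (\<lambda>x. g x (s1 x) (s2 x)) - (\<lambda>x. g x (br xi s1 x) (s2 x))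
          - (\<lambda>x. g x (s1 x) (br xi s2 x)) = 0)"

definition levi_civita where
  "levi_civita C Gam rho br g nabla \<longleftrightarrow>
     (\<forall>s\<in>Gam. \<forall>t\<in>Gam. nabla s t \<in> Gam) \<and>
     (\<forall>s\<in>Gam. \<forall>s'\<in>Gam. \<forall>t\<in>Gam. \<forall>f\<in>C. nabla (fmul f s + s') t = fmul f (nabla s t) + nabla s' t) \<and>
     (\<forall>s\<in>Gam. \<forall>t\<in>Gam. \<forall>t'\<in>Gam. \<forall>f\<in>C.
        nabla s (fmul f t + t') = fmul f (nabla s t) + fmul (rho s f) t + nabla s t') \<and>
     (\<forall>s1\<in>Gam. \<forall>s2\<in>Gam. nabla s1 s2 - nabla s2 s1 = br s1 s2) \<and>
     (\<forall>s\<in>Gam. \<forall>s1\<in>Gam. \<forall>s2\<in>Gam.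
        rho s (\<lambda>x. g x (s1 x) (s2 x)) =
          (\<lambda>x. g x (nabla s s1 x) (s2 x) + g x (s1 x) (nabla s s2 x)))"

end

theory Submission
  imports Defs
begin

lemma lin_add: "lin_on V f \<Longrightarrow> u\<in>V \<Longrightarrow> v\<in>V \<Longrightarrow> f (u + v) = f u + f v"
  unfolding lin_on_def by blast

lemma lin_scale: "lin_on V f \<Longrightarrow> u\<in>V \<Longrightarrow> f (c *\<^sub>R u) = c *\<^sub>R f u"
  unfolding lin_on_def by blast

lemma lin_neg: assumes "lin_on V f" "subspace V" "u\<in>V" shows "f (- u) = - f u"
  using lin_scale[OF assms(1) assms(3), of "-1"] by simp

lemma lin_diff: assumes "lin_on V f" "subspace V" "u\<in>V" "v\<in>V" shows "f (u - v) = f u - f v"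
proof -
  have "- v \<in> V" using assms subspace_neg by blast
  then have "f (u + - v) = f u + f (- v)" using lin_add[OF assms(1) assms(3)] by blast
  then show ?thesis using lin_neg[OF assms(1,2,4)] by simp
qed

lemma lin_zero: assumes "lin_on V f" "subspace V" shows "f 0 = 0"
proof -
  have "0 \<in> V" using assms subspace_0 by blast
  then show ?thesis using lin_scale[OF assms(1), of 0 0] by simp
qed

theorem proposition4p7:
  fixes C :: "('m \<Rightarrow> real) set" and fib :: "'m \<Rightarrow> 'v::real_vector set"
    and Gam :: "('m \<Rightarrow> 'v) set" and m :: nat
    and rho :: "('m \<Rightarrow> 'v) \<Rightarrow> ('m \<Rightarrow> real) \<Rightarrow> ('m \<Rightarrow> real)"
    and br :: "('m \<Rightarrow> 'v) \<Rightarrow> ('m \<Rightarrow> 'v) \<Rightarrow> ('m \<Rightarrow> 'v)"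
    and F :: "'m \<Rightarrow> 'v \<Rightarrow> 'v" and xi :: "'m \<Rightarrow> 'v"
    and eta :: "'m \<Rightarrow> 'v \<Rightarrow> real" and g :: "'m \<Rightarrow> 'v \<Rightarrow> 'v \<Rightarrow> real"
    and nabla :: "('m \<Rightarrow> 'v) \<Rightarrow> ('m \<Rightarrow> 'v) \<Rightarrow> ('m \<Rightarrow> 'v)"
  assumes "K_contact_lie_algebroid C fib Gam m rho br F xi eta g"
    and "levi_civita C Gam rho br g nabla"
  shows "(\<forall>s1\<in>Gam. \<forall>s2\<in>Gam.
           rho s1 (\<lambda>x. eta x (s2 x)) - (\<lambda>x. eta x (nabla s1 s2 x))
             = (\<lambda>x. g x (nabla s1 xi x) (s2 x))
         \<and> (\<lambda>x. g x (nabla s1 xi x) (s2 x)) = Omega_E F g s1 s2)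
         \<and> (\<forall>s\<in>Gam. nabla s (\<lambda>x. F x (xi x)) - (\<lambda>x. F x (nabla s xi x))
           = (\<lambda>x. - s x + eta x (s x) *\<^sub>R xi x))"
proof -
  have LA: "lie_algebroid C fib Gam (2*m+1) rho br"
    and AC: "almost_contact_riemannian C fib Gam F xi eta g"
    and dE: "\<forall>s1\<in>Gam. \<forall>s2\<in>Gam. d_E rho br eta s1 s2 = Omega_E F g s1 s2"
    and kil: "\<forall>s1\<in>Gam. \<forall>s2\<in>Gam.
        rho xi (\<lambda>x. g x (s1 x) (s2 x)) - (\<lambda>x. g x (br xi s1 x) (s2 x))
          - (\<lambda>x. g x (s1 x) (br xi s2 x)) = 0"
    using assms(1) unfolding K_contact_lie_algebroid_def by auto
  have VB: "vector_bundle C fib Gam (2*m+1)" using LA unfolding lie_algebroid_def by auto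
  have sub: "\<And>x. subspace (fib x)" and secfib: "\<And>s x. s\<in>Gam \<Longrightarrow> s x \<in> fib x"
    and srj: "\<And>x v. v\<in>fib x \<Longrightarrow> \<exists>s\<in>Gam. s x = v" and zG: "(\<lambda>_. 0) \<in> Gam"
    using VB unfolding vector_bundle_def by auto
  have Flin: "\<And>x. lin_on (fib x) (F x)" and Ffib: "\<And>x v. v\<in>fib x \<Longrightarrow> F x v \<in> fib x"
    and etalin: "\<And>x. lin_on (fib x) (eta x)"
    and glin: "\<And>x u. u\<in>fib x \<Longrightarrow> lin_on (fib x) (g x u)"
    and gsym: "\<And>x u v. u\<in>fib x \<Longrightarrow> v\<in>fib x \<Longrightarrow> g x u v = g x v u"
    and gpos: "\<And>x u. u\<in>fib x \<Longrightarrow> u \<noteq> 0 \<Longrightarrow> g x u u > 0"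
    and FG: "\<And>s. s\<in>Gam \<Longrightarrow> (\<lambda>x. F x (s x)) \<in> Gam"
    and xiG: "xi \<in> Gam"
    and F2: "\<And>x v. v\<in>fib x \<Longrightarrow> F x (F x v) = - v + eta x v *\<^sub>R xi x"
    and etaxi: "\<And>x. eta x (xi x) = 1"
    and gF: "\<And>x u v. u\<in>fib x \<Longrightarrow> v\<in>fib x \<Longrightarrow> g x (F x u) (F x v) = g x u v - eta x u * eta x v"
    using AC unfolding almost_contact_riemannian_def by auto
  have nabG: "\<And>s t. s\<in>Gam \<Longrightarrow> t\<in>Gam \<Longrightarrow> nabla s t \<in> Gam"
    and nl2: "\<And>s t t' f. s\<in>Gam \<Longrightarrow> t\<in>Gam \<Longrightarrow> t'\<in>Gam \<Longrightarrow> f\<in>C \<Longrightarrow>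
        nabla s (fmul f t + t') = fmul f (nabla s t) + fmul (rho s f) t + nabla s t'"
    and tors: "\<And>s1 s2. s1\<in>Gam \<Longrightarrow> s2\<in>Gam \<Longrightarrow> nabla s1 s2 - nabla s2 s1 = br s1 s2"
    and met: "\<And>s s1 s2. s\<in>Gam \<Longrightarrow> s1\<in>Gam \<Longrightarrow> s2\<in>Gam \<Longrightarrow>
        rho s (\<lambda>x. g x (s1 x) (s2 x)) = (\<lambda>x. g x (nabla s s1 x) (s2 x) + g x (s1 x) (nabla s s2 x))"
    using assms(2) unfolding levi_civita_def by auto
  have oneC: "(\<lambda>_. 1) \<in> C" using VB unfolding vector_bundle_def smooth_algebra_def by auto
  have xif: "\<And>x. xi x \<in> fib x" using secfib xiG by blast
  have g2diff: "\<And>x u v w. u\<in>fib x \<Longrightarrow> v\<in>fib x \<Longrightarrow> w\<in>fib x \<Longrightarrow> g x u (v - w) = g x u v - g x u w"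
    using lin_diff glin sub by blast
  have g1diff: "\<And>x u v w. u\<in>fib x \<Longrightarrow> v\<in>fib x \<Longrightarrow> w\<in>fib x \<Longrightarrow> g x (v - w) u = g x v u - g x w u"
  proof -
    fix x u v w assume h: "u\<in>fib x" "v\<in>fib x" "w\<in>fib x"
    have "v - w \<in> fib x" using h sub subspace_diff by blast
    then have "g x (v - w) u = g x u (v - w)" using h gsym by blast
    also have "\<dots> = g x u v - g x u w" using g2diff h by blast
    also have "\<dots> = g x v u - g x w u" using gsym h by simp
    finally show "g x (v - w) u = g x v u - g x w u" .
  qed
  have g2add: "\<And>x u v w. u\<in>fib x \<Longrightarrow> v\<in>fib x \<Longrightarrow> w\<in>fib x \<Longrightarrow> g x u (v + w) = g x u v + g x u w"
    using lin_add glin by blast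
  have g1add: "\<And>x u v w. u\<in>fib x \<Longrightarrow> v\<in>fib x \<Longrightarrow> w\<in>fib x \<Longrightarrow> g x (v + w) u = g x v u + g x w u"
  proof -
    fix x u v w assume h: "u\<in>fib x" "v\<in>fib x" "w\<in>fib x"
    have "v + w \<in> fib x" using h sub subspace_add by blast
    then have "g x (v + w) u = g x u (v + w)" using h gsym by blast
    also have "\<dots> = g x u v + g x u w" using g2add h by blast
    also have "\<dots> = g x v u + g x w u" using gsym h by simp
    finally show "g x (v + w) u = g x v u + g x w u" .
  qed
  have key: "\<And>x v. v\<in>fib x \<Longrightarrow> eta x (F x v) *\<^sub>R xi x = eta x v *\<^sub>R F x (xi x)"
  proof -
    fix x v assume v: "v\<in>fib x"
    have Fv: "F x v \<in> fib x" using Ffib v by blast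
    have a: "F x (F x (F x v)) = - F x v + eta x (F x v) *\<^sub>R xi x" using F2[OF Fv] .
    have nv: "- v \<in> fib x" using v sub subspace_neg by blast
    have sx: "eta x v *\<^sub>R xi x \<in> fib x" using xif sub subspace_scale by blast
    have "F x (F x (F x v)) = F x (- v + eta x v *\<^sub>R xi x)" using F2[OF v] by simp
    also have "\<dots> = F x (- v) + F x (eta x v *\<^sub>R xi x)" using lin_add[OF Flin nv sx] .
    also have "\<dots> = - F x v + eta x v *\<^sub>R F x (xi x)"
      using lin_neg[OF Flin sub v] lin_scale[OF Flin xif] by simp
    finally show "eta x (F x v) *\<^sub>R xi x = eta x v *\<^sub>R F x (xi x)" using a by simp
  qed
  have Fxi: "\<And>x. F x (xi x) = 0"
  proof -
    fix x
    define c where "c = eta x (F x (xi x))"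
    have e1: "F x (xi x) = c *\<^sub>R xi x" using key[OF xif, of x] etaxi[of x] c_def by simp
    have "F x (F x (xi x)) = 0" using F2[OF xif, of x] etaxi[of x] by simp
    moreover have "F x (F x (xi x)) = (c*c) *\<^sub>R xi x"
      using e1 lin_scale[OF Flin xif] by simp
    ultimately have "(c*c) *\<^sub>R xi x = 0" by simp
    then have "eta x ((c*c) *\<^sub>R xi x) = eta x 0" by (rule arg_cong)
    then have "eta x ((c*c) *\<^sub>R xi x) = 0" using lin_zero[OF etalin sub, of x] by (rule trans)
    then have "c*c = 0" using lin_scale[OF etalin xif] etaxi[of x] by simp
    then show "F x (xi x) = 0" using e1 by simp
  qed
  have etaF: "\<And>x v. v\<in>fib x \<Longrightarrow> eta x (F x v) = 0"
  proof -
    fix x v assume v: "v\<in>fib x"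
    have "eta x (F x v) *\<^sub>R xi x = 0" using key[OF v] Fxi by simp
    then have "eta x (eta x (F x v) *\<^sub>R xi x) = eta x 0" by (rule arg_cong)
    then have "eta x (eta x (F x v) *\<^sub>R xi x) = 0" using lin_zero[OF etalin sub, of x] by (rule trans)
    then show "eta x (F x v) = 0" using lin_scale[OF etalin xif] etaxi[of x] by simp
  qed
  have g0: "\<And>x w. w\<in>fib x \<Longrightarrow> g x 0 w = 0"
  proof -
    fix x w assume w: "w\<in>fib x"
    have "0 \<in> fib x" using sub subspace_0 by blast
    then have "g x 0 w = g x w 0" using gsym w by blast
    then show "g x 0 w = 0" using lin_zero[OF glin[OF w] sub] by simp
  qed
  have gxi: "\<And>x v. v\<in>fib x \<Longrightarrow> g x (xi x) v = eta x v"
  proof -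
    fix x v assume v: "v\<in>fib x"
    have "g x (F x (xi x)) (F x v) = g x (xi x) v - eta x (xi x) * eta x v" using gF[OF xif v] .
    then show "g x (xi x) v = eta x v" using Fxi g0 Ffib[OF v] etaxi by simp
  qed
  have gskew: "\<And>x u v. u\<in>fib x \<Longrightarrow> v\<in>fib x \<Longrightarrow> g x u (F x v) = - g x (F x u) v"
  proof -
    fix x u v assume u: "u\<in>fib x" and v: "v\<in>fib x"
    have Fu: "F x u \<in> fib x" and Fv: "F x v \<in> fib x" using Ffib u v by auto
    have "g x (F x u) (F x (F x v)) = g x u (F x v)" using gF[OF u Fv] etaF[OF v] by simp
    moreover have nv: "- v \<in> fib x" using v sub subspace_neg by blast
    moreover have sx: "eta x v *\<^sub>R xi x \<in> fib x" using xif sub subspace_scale by blast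
    ultimately have "g x u (F x v) = g x (F x u) (- v) + g x (F x u) (eta x v *\<^sub>R xi x)"
      using F2[OF v] g2add[OF Fu nv sx] by simp
    also have "\<dots> = - g x (F x u) v + eta x v * g x (F x u) (xi x)"
      using lin_neg[OF glin[OF Fu] sub v] lin_scale[OF glin[OF Fu] xif] by simp
    also have "g x (F x u) (xi x) = 0" using gsym[OF Fu xif] gxi[OF Fu] etaF[OF u] by simp
    finally show "g x u (F x v) = - g x (F x u) v" by simp
  qed
  have A: "\<And>s1 s2 x. s1\<in>Gam \<Longrightarrow> s2\<in>Gam \<Longrightarrow>
      rho s1 (\<lambda>x. eta x (s2 x)) x = g x (nabla s1 xi x) (s2 x) + eta x (nabla s1 s2 x)"
  proof -
    fix s1 s2 x assume h: "s1\<in>Gam" "s2\<in>Gam"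
    have "(\<lambda>x. eta x (s2 x)) = (\<lambda>x. g x (xi x) (s2 x))" using gxi secfib h by auto
    then have "rho s1 (\<lambda>x. eta x (s2 x)) x = g x (nabla s1 xi x) (s2 x) + g x (xi x) (nabla s1 s2 x)"
      using met[OF h(1) xiG h(2)] by simp
    then show "rho s1 (\<lambda>x. eta x (s2 x)) x = g x (nabla s1 xi x) (s2 x) + eta x (nabla s1 s2 x)"
      using gxi secfib nabG h by auto
  qed
  have B: "\<And>s1 s2 x. s1\<in>Gam \<Longrightarrow> s2\<in>Gam \<Longrightarrow>
      g x (nabla s1 xi x) (s2 x) + g x (nabla s2 xi x) (s1 x) = 0"
  proof -
    fix s1 s2 x assume h: "s1\<in>Gam" "s2\<in>Gam"
    have k: "rho xi (\<lambda>x. g x (s1 x) (s2 x)) x - g x (br xi s1 x) (s2 x)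
          - g x (s1 x) (br xi s2 x) = 0"
    proof -
      have "rho xi (\<lambda>x. g x (s1 x) (s2 x)) - (\<lambda>x. g x (br xi s1 x) (s2 x))
          - (\<lambda>x. g x (s1 x) (br xi s2 x)) = 0" using kil h by blast
      from fun_cong[OF this, of x] show ?thesis by simp
    qed
    have r: "rho xi (\<lambda>x. g x (s1 x) (s2 x)) x = g x (nabla xi s1 x) (s2 x) + g x (s1 x) (nabla xi s2 x)"
      using met[OF xiG h] by simp
    have b1: "br xi s1 x = nabla xi s1 x - nabla s1 xi x" using fun_cong[OF tors[OF xiG h(1)], of x] by simp
    have b2: "br xi s2 x = nabla xi s2 x - nabla s2 xi x" using fun_cong[OF tors[OF xiG h(2)], of x] by simp
    have f: "nabla xi s1 x \<in> fib x" "nabla s1 xi x \<in> fib x" "nabla xi s2 x \<in> fib x"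
         "nabla s2 xi x \<in> fib x" "s1 x \<in> fib x" "s2 x \<in> fib x"
      using nabG secfib h xiG by auto
    have "g x (br xi s1 x) (s2 x) = g x (nabla xi s1 x) (s2 x) - g x (nabla s1 xi x) (s2 x)"
      using b1 g1diff f by simp
    moreover have "g x (s1 x) (br xi s2 x) = g x (s1 x) (nabla xi s2 x) - g x (s1 x) (nabla s2 xi x)"
      using b2 g2diff f by simp
    moreover have "g x (s1 x) (nabla s2 xi x) = g x (nabla s2 xi x) (s1 x)" using gsym f by blast
    ultimately show "g x (nabla s1 xi x) (s2 x) + g x (nabla s2 xi x) (s1 x) = 0"
      using k r by simp
  qed
  have Cst: "\<And>s1 s2 x. s1\<in>Gam \<Longrightarrow> s2\<in>Gam \<Longrightarrow>
      g x (nabla s1 xi x) (s2 x) = Omega_E F g s1 s2 x"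
  proof -
    fix s1 s2 x assume h: "s1\<in>Gam" "s2\<in>Gam"
    have bb: "br s1 s2 x = nabla s1 s2 x - nabla s2 s1 x" using fun_cong[OF tors[OF h], of x] by simp
    have f: "nabla s1 s2 x \<in> fib x" "nabla s2 s1 x \<in> fib x" using nabG secfib h by auto
    have e: "eta x (br s1 s2 x) = eta x (nabla s1 s2 x) - eta x (nabla s2 s1 x)"
      using bb lin_diff[OF etalin sub f] by simp
    have "d_E rho br eta s1 s2 x = g x (nabla s1 xi x) (s2 x)"
      unfolding d_E_def using A[OF h, of x] A[OF h(2) h(1), of x] e B[OF h, of x] by simp
    moreover have "d_E rho br eta s1 s2 = Omega_E F g s1 s2" using dE h by blast
    ultimately show "g x (nabla s1 xi x) (s2 x) = Omega_E F g s1 s2 x" by simp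
  qed
  have part1: "\<forall>s1\<in>Gam. \<forall>s2\<in>Gam.
           rho s1 (\<lambda>x. eta x (s2 x)) - (\<lambda>x. eta x (nabla s1 s2 x))
             = (\<lambda>x. g x (nabla s1 xi x) (s2 x))
         \<and> (\<lambda>x. g x (nabla s1 xi x) (s2 x)) = Omega_E F g s1 s2"
    using A Cst by (auto simp: fun_eq_iff)
  have nab0: "\<And>s. s\<in>Gam \<Longrightarrow> nabla s (\<lambda>_. 0) = (\<lambda>_. 0)"
  proof -
    fix s assume s: "s\<in>Gam"
    define N where "N = nabla s (\<lambda>_. 0)"
    have e: "fmul (\<lambda>_. 1) (\<lambda>_. 0) + (\<lambda>_. 0) = (\<lambda>_. (0::'v))" by (simp add: fmul_def fun_eq_iff)
    have "nabla s (fmul (\<lambda>_. 1) (\<lambda>_. 0) + (\<lambda>_. 0)) = fmul (\<lambda>_. 1) N + fmul (rho s (\<lambda>_. 1)) (\<lambda>_. 0) + N"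
      using nl2[OF s zG zG oneC] unfolding N_def .
    then have "N = fmul (\<lambda>_. 1) N + fmul (rho s (\<lambda>_. 1)) (\<lambda>_. 0) + N"
      unfolding e N_def .
    then have "\<And>x. N x = N x + 0 + N x" by (simp add: fmul_def fun_eq_iff)
    then show "nabla s (\<lambda>_. 0) = (\<lambda>_. 0)" unfolding N_def by (simp add: fun_eq_iff)
  qed
  have D: "\<And>s x. s\<in>Gam \<Longrightarrow> nabla s xi x = - F x (s x)"
  proof -
    fix s x assume s: "s\<in>Gam"
    have f: "nabla s xi x \<in> fib x" "F x (s x) \<in> fib x" "s x \<in> fib x"
      using nabG secfib s xiG Ffib by auto
    define w where "w = nabla s xi x + F x (s x)"
    have wf: "w \<in> fib x" using f sub subspace_add w_def by blast
    obtain t where t: "t\<in>Gam" "t x = w" using srj[OF wf] by blast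
    have "g x w w = g x (nabla s xi x) (t x) + g x (F x (s x)) (t x)"
      using g1add f wf t w_def by simp
    also have "\<dots> = g x (s x) (F x (t x)) + g x (F x (s x)) (t x)"
      using Cst[OF s t(1), of x] unfolding Omega_E_def by simp
    also have "\<dots> = 0" using gskew f t wf by simp
    finally have "w = 0" using gpos[OF wf] by force
    then show "nabla s xi x = - F x (s x)" unfolding w_def by (simp add: eq_neg_iff_add_eq_0)
  qed
  have part2: "\<forall>s\<in>Gam. nabla s (\<lambda>x. F x (xi x)) - (\<lambda>x. F x (nabla s xi x))
           = (\<lambda>x. - s x + eta x (s x) *\<^sub>R xi x)"
  proof
    fix s assume s: "s\<in>Gam"
    have "(\<lambda>x. F x (xi x)) = (\<lambda>_. 0)" using Fxi by auto
    then have n: "nabla s (\<lambda>x. F x (xi x)) = (\<lambda>_. 0)" using nab0[OF s] by simp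
    have "\<And>x. F x (nabla s xi x) = s x - eta x (s x) *\<^sub>R xi x"
    proof -
      fix x
      have f: "s x \<in> fib x" "F x (s x) \<in> fib x" using secfib s Ffib by auto
      have "F x (nabla s xi x) = - F x (F x (s x))" using D[OF s] lin_neg[OF Flin sub f(2)] by simp
      then show "F x (nabla s xi x) = s x - eta x (s x) *\<^sub>R xi x" using F2[OF f(1)] by simp
    qed
    then show "nabla s (\<lambda>x. F x (xi x)) - (\<lambda>x. F x (nabla s xi x))
           = (\<lambda>x. - s x + eta x (s x) *\<^sub>R xi x)" using n by (simp add: fun_eq_iff)
  qed
  show ?thesis using part1 part2 by blast
qed

end
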